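(* Let $K$ and $S$ be compact Hausdorff spaces. The following are equivalent: (i) there exists a U-embedding $T\colon C(K)\to C(S)$; (ii) there exists a continuous embedding $h\colon K\to S$ admitting a linear extension operator of norm one, with $h(K)$ a $G_\delta$-subset of $S$.
   Context: $C(K)$, $C(S)$ carry the sup norm. A linear isometry $T\colon X\to Y$ is a U-embedding if every $x^*\in X^*$ has a unique $y^*\in Y^*$ with $T^*(y^* )=x^*$ and $\|y^*\|=\|x^*\|$. For a continuous embedding (homeomorphism onto its image) $h\colon K\to S$, a linear operator $v\colon C(K)\to C(S)$ is a linear extension operator for $h$ if $(vf)(h(k))=f(k)$ for every $f\in C(K)$ and $k\in K$ (equivalently $v^*(\delta_{h(k)})=\delta_k$ for all $k\in K$). *)

theory Defs
  imports "HOL-Analysis.Analysis"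
begin

(* C(K) for compact K is modelled as the type 'k \<Rightarrow>\<^sub>C real (bounded continuous
   functions, sup norm); on a compact space every continuous function is bounded.
   The dual X* is X \<Rightarrow>\<^sub>L real with the operator norm; the adjoint is T*(y) = y o\<^sub>L T. *)

definition U_embedding :: "('x::real_normed_vector \<Rightarrow>\<^sub>L 'y::real_normed_vector) \<Rightarrow> bool" where
  "U_embedding T \<longleftrightarrow>
     (\<forall>x. norm (T x) = norm x) \<and>
     (\<forall>xs :: 'x \<Rightarrow>\<^sub>L real. \<exists>!ys :: 'y \<Rightarrow>\<^sub>L real. ys o\<^sub>L T = xs \<and> norm ys = norm xs)"

definition linear_extension_operator ::
  "('k::topological_space \<Rightarrow> 's::topological_space) \<Rightarrow> (('k \<Rightarrow>\<^sub>C real) \<Rightarrow>\<^sub>L ('s \<Rightarrow>\<^sub>C real)) \<Rightarrow> bool" where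
  "linear_extension_operator h v \<longleftrightarrow> (\<forall>f k. apply_bcontfun (v f) (h k) = apply_bcontfun f k)"

end

theory Submission
  imports Defs
begin

lemma t2_Hausdorff: "Hausdorff_space (euclidean :: 'a::t2_space topology)"
  unfolding Hausdorff_space_def disjnt_def topspace_euclidean open_openin[symmetric]
proof (intro allI impI)
  fix x y :: 'a assume "x \<in> UNIV \<and> y \<in> UNIV \<and> x \<noteq> y"
  then show "\<exists>U V. open U \<and> open V \<and> x \<in> U \<and> y \<in> V \<and> U \<inter> V = {}"
    using hausdorff[of x y] by simp
qed

lemma ury:
  fixes A B :: "'a::t2_space set"
  assumes "compact (UNIV::'a set)" "closed A" "closed B" "A \<inter> B = {}"
  obtains f :: "'a \<Rightarrow> real" where "continuous_on UNIV f" "\<And>x. 0 \<le> f x \<and> f x \<le> 1"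
     "\<And>x. x \<in> A \<Longrightarrow> f x = 0" "\<And>x. x \<in> B \<Longrightarrow> f x = 1"
proof -
  have cs: "compact_space (euclidean::'a topology)" using assms(1) by (simp add: compact_space_def)
  have ns: "normal_space (euclidean::'a topology)"
    by (rule compact_Hausdorff_or_regular_imp_normal_space[OF cs disjI1[OF t2_Hausdorff]])
  have ca: "closedin euclidean A" "closedin euclidean B" using assms(2,3) closed_closedin by blast+
  have dj: "disjnt A B" using assms(4) by (simp add: disjnt_def)
  obtain f where f: "continuous_map euclidean (top_of_set {0..1::real}) f" "f ` A \<subseteq> {0}" "f ` B \<subseteq> {1}"
    by (rule Urysohn_lemma[OF ns ca dj zero_le_one])
  have fc: "continuous_map euclidean euclidean f" and fr: "f ` topspace euclidean \<subseteq> {0..1}"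
    using f(1) unfolding continuous_map_in_subtopology by blast+
  have "continuous_on UNIV f" using fc unfolding continuous_map_iff_continuous2 .
  moreover have "\<And>x. 0 \<le> f x \<and> f x \<le> 1"
  proof -
    fix x have "f x \<in> {0..1}" using fr by (simp add: image_subset_iff)
    then show "0 \<le> f x \<and> f x \<le> 1" by simp
  qed
  moreover have "\<And>x. x \<in> A \<Longrightarrow> f x = 0" using f(2) by blast
  moreover have "\<And>x. x \<in> B \<Longrightarrow> f x = 1" using f(3) by blast
  ultimately show ?thesis using that by blast
qed

lemma ury_ex:
  fixes A B :: "'a::t2_space set"
  assumes "compact (UNIV::'a set)" "closed A" "closed B" "A \<inter> B = {}"
  shows "\<exists>f :: 'a \<Rightarrow> real. continuous_on UNIV f \<and> (\<forall>x. 0 \<le> f x \<and> f x \<le> 1) \<and>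
     (\<forall>x\<in>A. f x = 0) \<and> (\<forall>x\<in>B. f x = 1)"
proof (rule ury[OF assms])
  fix f :: "'a \<Rightarrow> real"
  assume "continuous_on UNIV f" "\<And>x. 0 \<le> f x \<and> f x \<le> 1" "\<And>x. x \<in> A \<Longrightarrow> f x = 0" "\<And>x. x \<in> B \<Longrightarrow> f x = 1"
  then show ?thesis by (intro exI[of _ f]) simp
qed

definition mkC :: "('a::topological_space \<Rightarrow> real) \<Rightarrow> 'a \<Rightarrow>\<^sub>C real" where "mkC f = Bcontfun f"

lemma mkC_apply:
  assumes "compact (UNIV::'a::topological_space set)" "continuous_on UNIV (f::'a\<Rightarrow>real)"
  shows "apply_bcontfun (mkC f) = f"
proof -
  have "bounded (range f)" by (rule compact_imp_bounded[OF compact_continuous_image[OF assms(2) assms(1)]])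
  then have "f \<in> bcontfun" using assms(2) by (simp add: bcontfun_def)
  then show ?thesis unfolding mkC_def by (rule Bcontfun_inverse)
qed

lemma norm_attained:
  assumes "compact (UNIV::'a::topological_space set)"
  shows "\<exists>x. \<bar>apply_bcontfun (f::'a\<Rightarrow>\<^sub>C real) x\<bar> = norm f"
proof -
  have c: "continuous_on UNIV (\<lambda>y. \<bar>apply_bcontfun f y\<bar>)" by (intro continuous_intros) simp
  obtain x where x: "\<forall>y\<in>UNIV. \<bar>f y\<bar> \<le> \<bar>f x\<bar>"
    using continuous_attains_sup[OF assms _ c] by blast
  have "norm f \<le> \<bar>f x\<bar>" by (rule norm_bound) (use x in simp)
  moreover have "\<bar>f x\<bar> \<le> norm f" using norm_bounded[of f x] by simp
  ultimately show ?thesis by auto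
qed

lemma absC: "\<bar>apply_bcontfun (f::'a::topological_space\<Rightarrow>\<^sub>C real) x\<bar> \<le> norm f"
  using norm_bounded[of f x] by simp

lemma normC_le: "(\<And>x. \<bar>apply_bcontfun (f::'a::topological_space\<Rightarrow>\<^sub>C real) x\<bar> \<le> b) \<Longrightarrow> norm f \<le> b"
  by (rule norm_bound) simp

definition one :: "'a::topological_space \<Rightarrow>\<^sub>C real" where "one = const_bcontfun 1"

lemma one_apply[simp]: "apply_bcontfun one x = 1" by (simp add: one_def)

lemma norm_one[simp]: "norm (one :: 'a::topological_space \<Rightarrow>\<^sub>C real) = 1"
proof -
  have "norm (one :: 'a \<Rightarrow>\<^sub>C real) \<le> 1" by (rule normC_le) simp
  moreover have "1 \<le> norm (one :: 'a \<Rightarrow>\<^sub>C real)" using absC[of one undefined] by simp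
  ultimately show ?thesis by simp
qed

definition Mul :: "('a::topological_space \<Rightarrow>\<^sub>C real) \<Rightarrow> ('a \<Rightarrow>\<^sub>C real) \<Rightarrow> ('a \<Rightarrow>\<^sub>C real)" where
  "Mul g \<phi> = Bcontfun (\<lambda>x. apply_bcontfun g x * apply_bcontfun \<phi> x)"

lemma mul_in: fixes g \<phi> :: "'a::topological_space \<Rightarrow>\<^sub>C real" shows "(\<lambda>x. apply_bcontfun g x * apply_bcontfun \<phi> x) \<in> bcontfun"
proof (rule bcontfun_normI)
  show "continuous_on UNIV (\<lambda>x. apply_bcontfun g x * apply_bcontfun \<phi> x)" by (intro continuous_intros) auto
  fix x show "norm (apply_bcontfun g x * apply_bcontfun \<phi> x) \<le> norm g * norm \<phi>"
    using absC[of g x] absC[of \<phi> x] by (simp add: abs_mult mult_mono)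
qed

lemma Mul_apply[simp]: "apply_bcontfun (Mul g \<phi>) x = apply_bcontfun g x * apply_bcontfun \<phi> x"
  unfolding Mul_def by (simp add: Bcontfun_inverse[OF mul_in])

lemma mulop_bl: fixes g :: "'a::topological_space \<Rightarrow>\<^sub>C real" shows "bounded_linear (Mul g)"
proof (rule bounded_linear_intro[where K="norm g"])
  fix \<phi> \<psi> :: "'a \<Rightarrow>\<^sub>C real" and r :: real
  show "Mul g (\<phi> + \<psi>) = Mul g \<phi> + Mul g \<psi>"
    by (rule bcontfun_eqI) (simp add: algebra_simps)
  show "Mul g (r *\<^sub>R \<phi>) = r *\<^sub>R Mul g \<phi>"
    by (rule bcontfun_eqI) (simp add: algebra_simps)
  show "norm (Mul g \<phi>) \<le> norm \<phi> * norm g"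
    by (rule normC_le) (simp add: abs_mult absC mult_mono mult.commute)
qed

definition mulop :: "('a::topological_space \<Rightarrow>\<^sub>C real) \<Rightarrow> ('a \<Rightarrow>\<^sub>C real) \<Rightarrow>\<^sub>L ('a \<Rightarrow>\<^sub>C real)" where
  "mulop g = Blinfun (Mul g)"

lemma mulop_apply[simp]: "apply_bcontfun (blinfun_apply (mulop g) \<phi>) x = apply_bcontfun g x * apply_bcontfun \<phi> x"
  unfolding mulop_def bounded_linear_Blinfun_apply[OF mulop_bl] by simp

lemma norm_mulop: "norm (mulop g) \<le> norm g"
proof (rule norm_blinfun_bound)
  fix \<phi>
  show "norm (blinfun_apply (mulop g) \<phi>) \<le> norm g * norm \<phi>"
    by (rule normC_le) (simp add: abs_mult absC mult_mono)
qed simp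

definition Comp :: "('k::topological_space \<Rightarrow> 's::topological_space) \<Rightarrow> ('s \<Rightarrow>\<^sub>C real) \<Rightarrow> ('k \<Rightarrow>\<^sub>C real)" where
  "Comp h \<phi> = Bcontfun (\<lambda>k. apply_bcontfun \<phi> (h k))"

lemma comp_in: fixes h :: "'k::topological_space \<Rightarrow> 's::topological_space" and \<phi> :: "'s \<Rightarrow>\<^sub>C real"
  assumes "continuous_on UNIV h" shows "(\<lambda>k. apply_bcontfun \<phi> (h k)) \<in> bcontfun"
proof (rule bcontfun_normI)
  show "continuous_on UNIV (\<lambda>k. apply_bcontfun \<phi> (h k))" using assms
    by (rule continuous_on_compose2[OF continuous_on_apply_bcontfun]) auto
  fix x show "norm (apply_bcontfun \<phi> (h x)) \<le> norm \<phi>" using absC by simp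
qed

lemma Comp_apply[simp]: "continuous_on UNIV h \<Longrightarrow> apply_bcontfun (Comp h \<phi>) x = apply_bcontfun \<phi> (h x)"
  unfolding Comp_def by (simp add: Bcontfun_inverse[OF comp_in])

lemma compop_bl: fixes h :: "'k::topological_space \<Rightarrow> 's::topological_space" assumes "continuous_on UNIV h"
  shows "bounded_linear (Comp h)"
proof (rule bounded_linear_intro[where K=1])
  fix \<phi> \<psi> :: "'s \<Rightarrow>\<^sub>C real" and r :: real
  show "Comp h (\<phi> + \<psi>) = Comp h \<phi> + Comp h \<psi>"
    by (rule bcontfun_eqI) (simp add: assms)
  show "Comp h (r *\<^sub>R \<phi>) = r *\<^sub>R Comp h \<phi>"
    by (rule bcontfun_eqI) (simp add: assms)
  show "norm (Comp h \<phi>) \<le> norm \<phi> * 1"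
    by (simp, rule normC_le) (simp add: assms absC)
qed

definition compop :: "('k::topological_space \<Rightarrow> 's::topological_space) \<Rightarrow> ('s \<Rightarrow>\<^sub>C real) \<Rightarrow>\<^sub>L ('k \<Rightarrow>\<^sub>C real)" where
  "compop h = Blinfun (Comp h)"

lemma compop_apply[simp]: "continuous_on UNIV h \<Longrightarrow> apply_bcontfun (blinfun_apply (compop h) \<phi>) x = apply_bcontfun \<phi> (h x)"
  unfolding compop_def by (simp add: bounded_linear_Blinfun_apply[OF compop_bl])

lemma norm_compop: "continuous_on UNIV h \<Longrightarrow> norm (compop h) \<le> 1"
proof (rule norm_blinfun_bound)
  fix \<phi> assume "continuous_on UNIV h"
  then show "norm (blinfun_apply (compop h) \<phi>) \<le> 1 * norm \<phi>"
    by (simp, intro normC_le) (simp add: absC)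
qed simp

definition ev :: "'a::topological_space \<Rightarrow> ('a \<Rightarrow>\<^sub>C real) \<Rightarrow>\<^sub>L real" where
  "ev s = Blinfun (\<lambda>\<phi>::'a \<Rightarrow>\<^sub>C real. apply_bcontfun \<phi> s)"

lemma ev_bl: "bounded_linear (\<lambda>\<phi>::'a::topological_space \<Rightarrow>\<^sub>C real. apply_bcontfun \<phi> s)"
  by (rule bounded_linear_intro[where K=1]) (simp_all add: absC)

lemma ev_apply[simp]: "blinfun_apply (ev s) \<phi> = apply_bcontfun \<phi> s"
  unfolding ev_def by (simp add: bounded_linear_Blinfun_apply[OF ev_bl])

lemma norm_ev[simp]: "norm (ev s) = 1"
proof -
  have "norm (ev s) \<le> 1" by (rule norm_blinfun_bound) (simp_all add: absC)
  moreover have "1 \<le> norm (ev s)" using norm_blinfun[of "ev s" one] by simp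
  ultimately show ?thesis by simp
qed

lemma approx_norm:
  fixes x :: "'a::real_normed_vector \<Rightarrow>\<^sub>L real"
  assumes "0 < e" shows "\<exists>f. norm f \<le> 1 \<and> blinfun_apply x f > norm x - e"
proof (cases "norm x - e < 0")
  case True then show ?thesis by (intro exI[of _ 0]) auto
next
  case False
  show ?thesis
  proof (rule ccontr)
    assume "\<not> ?thesis" then have H: "\<And>f. norm f \<le> 1 \<Longrightarrow> blinfun_apply x f \<le> norm x - e" by force
    have "norm x \<le> norm x - e"
    proof (rule norm_blinfun_bound)
      show "0 \<le> norm x - e" using False by simp
      fix f :: 'a
      show "norm (blinfun_apply x f) \<le> (norm x - e) * norm f"
      proof (cases "f = 0")
        case True then show ?thesis by simp
      next
        case False
        define f' where "f' = f /\<^sub>R norm f"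
        have n: "norm f' = 1" "norm (-f') = 1" using False by (auto simp: f'_def)
        have "blinfun_apply x f' \<le> norm x - e" "blinfun_apply x (-f') \<le> norm x - e" using H n by auto
        then have a: "\<bar>blinfun_apply x f'\<bar> \<le> norm x - e" by (auto simp: blinfun.minus_right)
        have "blinfun_apply x f = norm f * blinfun_apply x f'"
          using False by (simp add: f'_def blinfun.scaleR_right)
        then show ?thesis using a by (simp add: abs_mult mult.commute mult_left_mono)
      qed
    qed
    then show False using assms by simp
  qed
qed

lemma KL:
  fixes T :: "('k::topological_space \<Rightarrow>\<^sub>C real) \<Rightarrow>\<^sub>L ('s::t2_space \<Rightarrow>\<^sub>C real)"
    and y :: "('s \<Rightarrow>\<^sub>C real) \<Rightarrow>\<^sub>L real" and xs :: "('k \<Rightarrow>\<^sub>C real) \<Rightarrow>\<^sub>L real"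
    and g :: "'s \<Rightarrow>\<^sub>C real" and A :: "'s set" and \<phi> :: "'s \<Rightarrow>\<^sub>C real"
  assumes cS: "compact (UNIV :: 's set)"
    and g01: "\<And>s. 0 \<le> apply_bcontfun g s \<and> apply_bcontfun g s \<le> 1"
    and glt: "\<And>s. s \<notin> A \<Longrightarrow> apply_bcontfun g s < 1"
    and Tb: "\<And>f s. \<bar>apply_bcontfun (blinfun_apply T f) s\<bar> \<le> apply_bcontfun g s * norm f"
    and yT: "\<And>f. blinfun_apply y (blinfun_apply T f) = blinfun_apply xs f"
    and ny: "norm y = norm xs"
    and van: "\<And>s. s \<in> A \<Longrightarrow> apply_bcontfun \<phi> s = 0"
  shows "blinfun_apply y \<phi> = 0"
proof (rule ccontr)
  assume ne: "blinfun_apply y \<phi> \<noteq> 0"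
  define N where "N = norm y"
  have yb: "\<And>w. \<bar>blinfun_apply y w\<bar> \<le> N * norm w" unfolding N_def using norm_blinfun by (metis real_norm_def)
  have nphi: "norm \<phi> > 0" using ne by (metis blinfun.zero_right zero_less_norm_iff)
  have Npos: "N > 0" using yb[of \<phi>] ne nphi
    by (metis N_def abs_ge_zero dual_order.antisym mult_eq_0_iff norm_ge_zero not_less zero_less_abs_iff)
  define \<phi>1 where "\<phi>1 = (sgn (blinfun_apply y \<phi>) / norm \<phi>) *\<^sub>R \<phi>"
  define \<delta> where "\<delta> = \<bar>blinfun_apply y \<phi>\<bar> / norm \<phi>"
  have dpos: "\<delta> > 0" using ne nphi by (simp add: \<delta>_def)
  have yphi1: "blinfun_apply y \<phi>1 = \<delta>"
    by (simp add: \<phi>1_def \<delta>_def blinfun.scaleR_right sgn_mult_abs abs_sgn mult.commute)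
  have phi1b: "\<bar>apply_bcontfun \<phi>1 s\<bar> \<le> 1" for s
  proof -
    have e1: "apply_bcontfun \<phi>1 s = (sgn (blinfun_apply y \<phi>) / norm \<phi>) * apply_bcontfun \<phi> s"
      by (simp add: \<phi>1_def)
    have "sgn (blinfun_apply y \<phi>) = 1 \<or> sgn (blinfun_apply y \<phi>) = -1" using ne by (auto simp: sgn_real_def)
    then have "\<bar>apply_bcontfun \<phi>1 s\<bar> = \<bar>apply_bcontfun \<phi> s\<bar> / norm \<phi>"
      unfolding e1 by (elim disjE) (simp_all add: abs_mult)
    also have "\<dots> \<le> 1" using absC[of \<phi> s] nphi by simp
    finally show ?thesis .
  qed
  have van1: "s \<in> A \<Longrightarrow> apply_bcontfun \<phi>1 s = 0" for s by (simp add: \<phi>1_def van)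
  define \<eta> where "\<eta> = \<delta> / (2 * N)"
  have etapos: "\<eta> > 0" using dpos Npos by (simp add: \<eta>_def)
  define cl where "cl = (\<lambda>s. apply_bcontfun \<phi>1 s - max (-\<eta>) (min \<eta> (apply_bcontfun \<phi>1 s)))"
  have clc: "continuous_on UNIV cl" unfolding cl_def by (intro continuous_intros) auto
  define \<phi>e where "\<phi>e = mkC cl"
  have phie: "apply_bcontfun \<phi>e = cl" unfolding \<phi>e_def by (rule mkC_apply[OF cS clc])
  have "norm (\<phi>1 - \<phi>e) \<le> \<eta>"
    by (rule normC_le) (use etapos in \<open>simp add: phie cl_def abs_le_iff max_def min_def\<close>)
  then have "blinfun_apply y \<phi>1 - blinfun_apply y \<phi>e \<le> N * \<eta>"
    using yb[of "\<phi>1 - \<phi>e"] Npos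
    by (smt (verit, best) blinfun.diff_right mult_left_mono)
  then have yphie: "blinfun_apply y \<phi>e \<ge> \<delta> / 2" using Npos yphi1 by (simp add: \<eta>_def)
  define C where "C = {s. \<eta> \<le> \<bar>apply_bcontfun \<phi>1 s\<bar>}"
  have clC: "closed C" unfolding C_def by (intro closed_Collect_le continuous_intros) auto
  have CA: "s \<in> C \<Longrightarrow> s \<notin> A" for s using van1 etapos by (force simp: C_def)
  obtain c where c: "0 \<le> c" "c < 1" "\<And>s. s \<in> C \<Longrightarrow> apply_bcontfun g s \<le> c"
  proof (cases "C = {}")
    case True then show ?thesis using that[of 0] by auto
  next
    case False
    have "compact C" using cS clC compact_Int_closed[of UNIV C] by simp
    then obtain s0 where "s0 \<in> C" "\<forall>s\<in>C. apply_bcontfun g s \<le> apply_bcontfun g s0"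
      using continuous_attains_sup[of C "apply_bcontfun g"] False by auto
    then show ?thesis using that[of "apply_bcontfun g s0"] g01 glt CA by auto
  qed
  have epos: "(1 - c) * \<delta> / 2 > 0" using c dpos by simp
  obtain f where f: "norm f \<le> 1" "blinfun_apply xs f > norm xs - (1 - c) * \<delta> / 2"
    using approx_norm[OF epos] by blast
  define \<psi> where "\<psi> = blinfun_apply T f + (1 - c) *\<^sub>R \<phi>e"
  have "norm \<psi> \<le> 1"
  proof (rule normC_le)
    fix s
    have Tfs: "\<bar>apply_bcontfun (blinfun_apply T f) s\<bar> \<le> apply_bcontfun g s"
      using Tb[of f s] f(1) g01[of s] by (smt (verit) mult_left_mono mult.commute mult_cancel_right1)
    show "\<bar>apply_bcontfun \<psi> s\<bar> \<le> 1"
    proof (cases "s \<in> C")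
      case True
      have "\<bar>cl s\<bar> \<le> 1" using phi1b[of s] etapos by (simp add: cl_def)
      then have "\<bar>(1 - c) * cl s\<bar> \<le> 1 - c" using c by (simp add: abs_mult mult_left_le)
      moreover have "\<bar>apply_bcontfun (blinfun_apply T f) s\<bar> \<le> c" using Tfs c(3)[OF True] by simp
      ultimately show ?thesis by (simp add: \<psi>_def phie)
    next
      case False
      then have "cl s = 0" by (simp add: C_def cl_def)
      then show ?thesis using Tfs g01[of s] by (simp add: \<psi>_def phie)
    qed
  qed
  then have "blinfun_apply y \<psi> \<le> N" using yb[of \<psi>] Npos
    by (smt (verit) mult_left_le)
  moreover have "blinfun_apply y \<psi> = blinfun_apply xs f + (1 - c) * blinfun_apply y \<phi>e"
    by (simp add: \<psi>_def blinfun.add_right blinfun.scaleR_right yT)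
  moreover have "(1 - c) * blinfun_apply y \<phi>e \<ge> (1 - c) * (\<delta> / 2)"
    using yphie c by (simp add: mult_left_mono)
  ultimately show False using f(2) ny N_def by simp
qed

lemma peakfun:
  fixes A :: "'s::t2_space set"
  assumes cS: "compact (UNIV :: 's set)" and clA: "closed A" and gd: "gdelta_in euclidean A"
  shows "\<exists>g::'s \<Rightarrow>\<^sub>C real. (\<forall>s. 0 \<le> apply_bcontfun g s \<and> apply_bcontfun g s \<le> 1) \<and>
            (\<forall>s\<in>A. apply_bcontfun g s = 1) \<and> (\<forall>s. s \<notin> A \<longrightarrow> apply_bcontfun g s < 1)"
proof -
  obtain \<U> where U: "countable \<U>" "\<U> \<subseteq> Collect open" "\<Inter>\<U> = A"
    using gd unfolding gdelta_in_alt intersection_of_def by auto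
  define \<V> where "\<V> = insert UNIV \<U>"
  have V: "countable \<V>" "\<V> \<noteq> {}" "\<V> \<subseteq> Collect open" "\<Inter>\<V> = A" using U by (auto simp: \<V>_def)
  define U where "U = from_nat_into \<V>"
  have rU: "range U = \<V>" using V by (simp add: U_def)
  have Uo: "open (U n)" for n using V rU by auto
  have AU: "A \<subseteq> U n" for n using V rU by auto
  have notin: "s \<notin> A \<Longrightarrow> \<exists>n. s \<notin> U n" for s using V(4) rU by auto
  have "\<forall>n. \<exists>f::'s \<Rightarrow> real. continuous_on UNIV f \<and> (\<forall>x. 0 \<le> f x \<and> f x \<le> 1) \<and> (\<forall>x. x \<notin> U n \<longrightarrow> f x = 0) \<and> (\<forall>x. x \<in> A \<longrightarrow> f x = 1)"
  proof
    fix n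
    have c1: "closed (- U n)" using Uo[of n] by (simp add: closed_Compl)
    have d1: "- U n \<inter> A = {}" using AU[of n] by auto
    obtain f :: "'s \<Rightarrow> real" where fp: "continuous_on UNIV f" "\<forall>x. 0 \<le> f x \<and> f x \<le> 1"
      "\<forall>x\<in>- U n. f x = 0" "\<forall>x\<in>A. f x = 1"
      using ury_ex[OF cS c1 clA d1] by blast
    show "\<exists>f::'s \<Rightarrow> real. continuous_on UNIV f \<and> (\<forall>x. 0 \<le> f x \<and> f x \<le> 1) \<and> (\<forall>x. x \<notin> U n \<longrightarrow> f x = 0) \<and> (\<forall>x. x \<in> A \<longrightarrow> f x = 1)"
      by (rule exI[of _ f]) (simp add: fp)
  qed
  then have "\<exists>F::nat \<Rightarrow> 's \<Rightarrow> real. \<forall>n. continuous_on UNIV (F n) \<and> (\<forall>x. 0 \<le> F n x \<and> F n x \<le> 1) \<and> (\<forall>x. x \<notin> U n \<longrightarrow> F n x = 0) \<and> (\<forall>x. x \<in> A \<longrightarrow> F n x = 1)"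
    by (rule choice)
  then obtain F :: "nat \<Rightarrow> 's \<Rightarrow> real" where FF: "\<forall>n. continuous_on UNIV (F n) \<and> (\<forall>x. 0 \<le> F n x \<and> F n x \<le> 1) \<and> (\<forall>x. x \<notin> U n \<longrightarrow> F n x = 0) \<and> (\<forall>x. x \<in> A \<longrightarrow> F n x = 1)"
    by (elim exE) (rule that)
  have F: "\<And>n. continuous_on UNIV (F n)" "\<And>n x. 0 \<le> F n x \<and> F n x \<le> 1"
    "\<And>n x. x \<notin> U n \<Longrightarrow> F n x = 0" "\<And>n x. x \<in> A \<Longrightarrow> F n x = 1"
    using FF by simp_all
  have hs: "summable (\<lambda>n. (1/2::real)^Suc n)" using power_half_series by (rule sums_summable)
  define g0 where "g0 x = (\<Sum>n. (1/2::real)^Suc n * F n x)" for x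
  have ul: "uniform_limit UNIV (\<lambda>n x. \<Sum>i<n. (1/2::real)^Suc i * F i x) g0 sequentially"
    unfolding g0_def
  proof (rule Weierstrass_m_test[OF _ hs])
    fix n x show "norm ((1/2::real)^Suc n * F n x) \<le> (1/2)^Suc n" using F(2)[of n x] by (simp add: abs_mult)
  qed
  have pc: "continuous_on UNIV (\<lambda>x. \<Sum>i<n. (1/2::real)^Suc i * F i x)" for n
    by (intro continuous_intros F(1))
  have cg: "continuous_on UNIV g0"
    by (rule uniform_limit_theorem[OF always_eventually[OF allI[OF pc]] ul]) simp
  define g where "g = mkC g0"
  have gapp: "apply_bcontfun g s = (\<Sum>n. (1/2)^Suc n * F n s)" for s
    unfolding g_def mkC_apply[OF cS cg] g0_def ..
  have ts: "summable (\<lambda>n. (1/2::real)^Suc n * F n s)" for s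
    by (rule summable_comparison_test'[OF hs]) (use F(2) in \<open>auto simp: abs_mult\<close>)
  have ds: "summable (\<lambda>n. (1/2::real)^Suc n - (1/2)^Suc n * F n s)" for s
    using summable_diff[OF hs ts[of s]] .
  have one_m: "1 - apply_bcontfun g s = (\<Sum>n. (1/2::real)^Suc n - (1/2)^Suc n * F n s)" for s
    using suminf_diff[OF hs ts[of s]] power_half_series by (simp add: gapp sums_unique[symmetric])
  have dnn: "0 \<le> (1/2::real)^Suc n - (1/2)^Suc n * F n s" for n s
    using F(2)[of n s] by (simp add: mult_left_le)
  show ?thesis
  proof (intro exI[of _ g] conjI allI ballI impI)
    fix s
    show "0 \<le> apply_bcontfun g s" unfolding gapp
      by (rule suminf_nonneg[OF ts]) (use F(2) in auto)
    show "apply_bcontfun g s \<le> 1" using suminf_nonneg[OF ds[of s] dnn] one_m[of s] by linarith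
  next
    fix s assume "s \<in> A"
    then show "apply_bcontfun g s = 1" using power_half_series by (simp add: gapp F(4) sums_unique[symmetric])
  next
    fix s assume "s \<notin> A"
    then obtain m where "s \<notin> U m" using notin by blast
    then have "0 < (1/2::real)^Suc m - (1/2)^Suc m * F m s" by (simp add: F(3))
    then have "0 < (\<Sum>n. (1/2::real)^Suc n - (1/2)^Suc n * F n s)"
      using suminf_pos_iff[OF ds dnn] by blast
    then show "apply_bcontfun g s < 1" using one_m[of s] by simp
  qed
qed

lemma dir2:
  fixes h :: "'k::t2_space \<Rightarrow> 's::t2_space" and v :: "('k \<Rightarrow>\<^sub>C real) \<Rightarrow>\<^sub>L ('s \<Rightarrow>\<^sub>C real)"
  assumes cK: "compact (UNIV::'k set)" and cS: "compact (UNIV::'s set)"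
   and emb: "embedding_map euclidean euclidean h" and lin: "linear_extension_operator h v" and nv: "norm v = 1"
   and gd: "gdelta_in euclidean (range h)"
  shows "\<exists>T :: ('k \<Rightarrow>\<^sub>C real) \<Rightarrow>\<^sub>L ('s \<Rightarrow>\<^sub>C real). U_embedding T"
proof -
  have hc: "continuous_on UNIV h" using emb
    unfolding embedding_map_def using homeomorphic_imp_continuous_map continuous_map_in_subtopology
    by (metis continuous_map_iff_continuous2)
  have clr: "closed (range h)" using compact_continuous_image[OF hc cK] by (simp add: compact_imp_closed)
  obtain g :: "'s \<Rightarrow>\<^sub>C real" where g01: "\<And>s. 0 \<le> apply_bcontfun g s \<and> apply_bcontfun g s \<le> 1"
    and g1: "\<And>s. s \<in> range h \<Longrightarrow> apply_bcontfun g s = 1" and glt: "\<And>s. s \<notin> range h \<Longrightarrow> apply_bcontfun g s < 1"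
    using peakfun[OF cS clr gd] by blast
  have vh: "apply_bcontfun (blinfun_apply v f) (h k) = apply_bcontfun f k" for f k
    using lin by (simp add: linear_extension_operator_def)
  have vb: "\<bar>apply_bcontfun (blinfun_apply v f) s\<bar> \<le> norm f" for f s
    using absC[of "blinfun_apply v f" s] norm_blinfun[of v f] nv by simp
  define T where "T = mulop g o\<^sub>L v"
  have Tapp: "apply_bcontfun (blinfun_apply T f) s = apply_bcontfun g s * apply_bcontfun (blinfun_apply v f) s" for f s
    by (simp add: T_def)
  have Th: "apply_bcontfun (blinfun_apply T f) (h k) = apply_bcontfun f k" for f k
    by (simp add: Tapp vh g1)
  have Tb: "\<bar>apply_bcontfun (blinfun_apply T f) s\<bar> \<le> apply_bcontfun g s * norm f" for f s
    unfolding Tapp abs_mult using g01[of s] vb[of f s] by (simp add: mult_left_mono)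
  have iso: "norm (blinfun_apply T f) = norm f" for f
  proof (rule antisym)
    show "norm (blinfun_apply T f) \<le> norm f"
    proof (rule normC_le)
      fix s
      have "\<bar>apply_bcontfun (blinfun_apply T f) s\<bar> \<le> apply_bcontfun g s * norm f" by (rule Tb)
      also have "\<dots> \<le> 1 * norm f" by (rule mult_right_mono) (use g01[of s] in simp_all)
      finally show "\<bar>apply_bcontfun (blinfun_apply T f) s\<bar> \<le> norm f" by simp
    qed
    obtain k where "\<bar>apply_bcontfun f k\<bar> = norm f" using norm_attained[OF cK] by blast
    then show "norm f \<le> norm (blinfun_apply T f)" using absC[of "blinfun_apply T f" "h k"] Th by simp
  qed
  have CT: "blinfun_apply (compop h) (blinfun_apply T f) = f" for f
    by (rule bcontfun_eqI) (simp add: hc Th)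
  have "U_embedding T"
    unfolding U_embedding_def
  proof (intro conjI allI)
    fix f show "norm (blinfun_apply T f) = norm f" by (rule iso)
  next
    fix xs :: "('k \<Rightarrow>\<^sub>C real) \<Rightarrow>\<^sub>L real"
    define z where "z = xs o\<^sub>L compop h"
    have zT: "z o\<^sub>L T = xs" by (rule blinfun_eqI) (simp add: z_def CT)
    have nz: "norm z = norm xs"
    proof (rule antisym)
      show "norm z \<le> norm xs" unfolding z_def
        using norm_blinfun_compose[of xs "compop h"] norm_compop[OF hc]
        by (smt (verit) mult_left_le norm_ge_zero)
      show "norm xs \<le> norm z"
      proof (rule norm_blinfun_bound)
        fix f
        have "blinfun_apply xs f = blinfun_apply z (blinfun_apply T f)" by (simp add: z_def CT)
        then show "norm (blinfun_apply xs f) \<le> norm z * norm f"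
          using norm_blinfun[of z "blinfun_apply T f"] iso by simp
      qed simp
    qed
    have uniq: "y = z" if yT: "y o\<^sub>L T = xs" and ny: "norm y = norm xs" for y
    proof (rule blinfun_eqI)
      fix \<phi>
      have yT': "\<And>f. blinfun_apply y (blinfun_apply T f) = blinfun_apply xs f"
        using yT by (metis blinfun_apply_blinfun_compose)
      define w where "w = blinfun_apply T (blinfun_apply (compop h) \<phi>)"
      have "blinfun_apply y (\<phi> - w) = 0"
      proof (rule KL[OF cS g01 glt Tb yT' ny])
        fix s assume "s \<in> range h"
        then obtain k where "s = h k" by blast
        then show "apply_bcontfun (\<phi> - w) s = 0" by (simp add: w_def Th hc)
      qed
      then have "blinfun_apply y \<phi> = blinfun_apply y w" by (simp add: blinfun.diff_right)
      also have "\<dots> = blinfun_apply z \<phi>" by (simp add: w_def yT' z_def)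
      finally show "blinfun_apply y \<phi> = blinfun_apply z \<phi>" .
    qed
    show "\<exists>!ys. ys o\<^sub>L T = xs \<and> norm ys = norm xs"
      using zT nz uniq by blast
  qed
  then show ?thesis by blast
qed

lemma sum_apply_C: "apply_bcontfun (sum F Q) x = (\<Sum>p\<in>Q. apply_bcontfun (F p) x)"
  for F :: "'b \<Rightarrow> ('a::topological_space \<Rightarrow>\<^sub>C real)"
  using blinfun.sum_right[of "ev x" F Q] by simp

lemma avg1:
  fixes a :: real and b :: "'p \<Rightarrow> real"
  assumes "finite Q" "a \<le> 1" "\<And>p. p \<in> Q \<Longrightarrow> b p \<le> 1" "a + sum b Q = real (card Q) + 1"
  shows "a = 1 \<and> (\<forall>p\<in>Q. b p = 1)"
proof -
  have "(\<Sum>p\<in>Q. 1 - b p) = real (card Q) - sum b Q" by (simp add: sum_subtractf)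
  then have e: "(1 - a) + (\<Sum>p\<in>Q. 1 - b p) = 0" using assms(4) by simp
  have nn: "(\<Sum>p\<in>Q. 1 - b p) \<ge> 0" by (rule sum_nonneg) (use assms(3) in auto)
  then have a1: "a = 1" and s0: "(\<Sum>p\<in>Q. 1 - b p) = 0" using e assms(2) by linarith+
  have "\<forall>p\<in>Q. 1 - b p = 0" using sum_nonneg_eq_0_iff[of Q "\<lambda>p. 1 - b p"] assms(1,3) s0 by auto
  then show ?thesis using a1 by auto
qed

lemma avg:
  fixes a :: real and b :: "'p \<Rightarrow> real"
  assumes "finite Q" "\<bar>a\<bar> \<le> 1" "\<And>p. p \<in> Q \<Longrightarrow> \<bar>b p\<bar> \<le> 1" "\<bar>a + sum b Q\<bar> = real (card Q) + 1"
  shows "\<bar>a\<bar> = 1 \<and> (\<forall>p\<in>Q. b p = a)"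
proof (cases "a + sum b Q \<ge> 0")
  case True
  then have "a + sum b Q = real (card Q) + 1" using assms(4) by simp
  then show ?thesis using avg1[of Q a b] assms(1,2,3) by (auto simp: abs_le_iff)
next
  case False
  then have "(-a) + sum (\<lambda>p. - b p) Q = real (card Q) + 1" using assms(4) by (simp add: sum_negf)
  then have "-a = 1 \<and> (\<forall>p\<in>Q. - b p = 1)" using avg1[of Q "-a" "\<lambda>p. - b p"] assms(1,2,3) by (auto simp: abs_le_iff)
  then show ?thesis by auto
qed

lemma pm1: "\<bar>x::real\<bar> = 1 \<Longrightarrow> x * x = 1"
  by (metis abs_mult_self_eq mult_1_right)

lemma bl_scale[simp]: "blinfun_apply (r *\<^sub>R F) x = r * blinfun_apply F x"
  for F :: "'a::real_normed_vector \<Rightarrow>\<^sub>L real"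
  by (simp add: blinfun.scaleR_left)

lemma ex1_same: "\<exists>!x. P x \<Longrightarrow> P a \<Longrightarrow> P b \<Longrightarrow> a = b"
  by blast

lemma sepC:
  fixes s s' :: "'a::t2_space"
  assumes "compact (UNIV::'a set)" "s \<noteq> s'"
  shows "\<exists>\<phi>::'a \<Rightarrow>\<^sub>C real. apply_bcontfun \<phi> s = 1 \<and> apply_bcontfun \<phi> s' = 0"
proof -
  have d: "{s'} \<inter> {s} = {}" using assms(2) by auto
  obtain f :: "'a \<Rightarrow> real" where fall: "continuous_on UNIV f \<and> (\<forall>x. 0 \<le> f x \<and> f x \<le> 1) \<and> (\<forall>x\<in>{s'}. f x = 0) \<and> (\<forall>x\<in>{s}. f x = 1)"
    using ury_ex[OF assms(1) closed_singleton closed_singleton d] by (elim exE) (rule that)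
  have f: "continuous_on UNIV f" "f s' = 0" "f s = 1" using fall by simp_all
  show ?thesis using f by (intro exI[of _ "mkC f"]) (simp add: mkC_apply[OF assms(1) f(1)])
qed

lemma cont_app: "continuous_on UNIV g \<Longrightarrow> continuous_on UNIV (\<lambda>z. apply_bcontfun f (g z))"
  by (rule continuous_on_compose2[OF continuous_on_apply_bcontfun]) auto

lemma dir1:
  fixes T :: "('k::t2_space \<Rightarrow>\<^sub>C real) \<Rightarrow>\<^sub>L ('s::t2_space \<Rightarrow>\<^sub>C real)"
  assumes cK: "compact (UNIV::'k set)" and cS: "compact (UNIV::'s set)" and UE: "U_embedding T"
  shows "\<exists>h::'k \<Rightarrow> 's. embedding_map euclidean euclidean h \<and>
            (\<exists>v. linear_extension_operator h v \<and> norm v = 1) \<and> gdelta_in euclidean (range h)"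
proof -
  have iso: "\<And>f. norm (blinfun_apply T f) = norm f" using UE unfolding U_embedding_def by blast
  have UQ: "\<And>xs :: ('k \<Rightarrow>\<^sub>C real) \<Rightarrow>\<^sub>L real. \<exists>!ys. ys o\<^sub>L T = xs \<and> norm ys = norm xs" using UE unfolding U_embedding_def by blast
  have Tb: "\<bar>apply_bcontfun (blinfun_apply T f) s\<bar> \<le> norm f" for f s
    using absC[of "blinfun_apply T f" s] iso by simp
  define u where "u = blinfun_apply T one"
  have ub: "\<bar>apply_bcontfun u s\<bar> \<le> 1" for s using Tb[of one s] by (simp add: u_def)
  define Good where "Good k s \<longleftrightarrow> \<bar>apply_bcontfun u s\<bar> = 1 \<and>
      (\<forall>f. apply_bcontfun (blinfun_apply T f) s = apply_bcontfun u s * apply_bcontfun f k)" for k s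
  have exA: "\<exists>s. Good k s" for k
  proof -
    define P where "P = {p :: 'k \<Rightarrow>\<^sub>C real. apply_bcontfun p k = 1 \<and> norm p \<le> 1}"
    define Aset where "Aset p = {s. \<bar>apply_bcontfun u s\<bar> = 1 \<and> apply_bcontfun (blinfun_apply T p) s = apply_bcontfun u s}" for p
    have "UNIV \<inter> \<Inter>(Aset ` P) \<noteq> {}"
    proof (rule compact_imp_fip[OF cS])
      fix t assume "t \<in> Aset ` P"
      then show "closed t" 
        by (auto simp: Aset_def intro!: closed_Collect_conj closed_Collect_eq continuous_intros)
    next
      fix F' assume F': "finite F'" "F' \<subseteq> Aset ` P"
      then obtain Q where Q: "Q \<subseteq> P" "finite Q" "F' = Aset ` Q" by (metis finite_subset_image)
      define n where "n = card Q"
      define q where "q = (1 / (real n + 1)) *\<^sub>R (one + sum id Q)"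
      have qapp: "apply_bcontfun q x = (1 + (\<Sum>p\<in>Q. apply_bcontfun p x)) / (real n + 1)" for x
        by (simp add: q_def sum_apply_C)
      have Tqapp: "apply_bcontfun (blinfun_apply T q) s =
          (apply_bcontfun u s + (\<Sum>p\<in>Q. apply_bcontfun (blinfun_apply T p) s)) / (real n + 1)" for s
        by (simp add: q_def u_def blinfun.scaleR_right blinfun.add_right blinfun.sum_right sum_apply_C)
      have pk: "p \<in> Q \<Longrightarrow> apply_bcontfun p k = 1" for p using Q P_def by auto
      have pb: "p \<in> Q \<Longrightarrow> \<bar>apply_bcontfun p x\<bar> \<le> 1" for p x using Q P_def absC[of p x] by force
      have qk: "apply_bcontfun q k = 1" using pk by (simp add: qapp n_def)
      have "norm q \<le> 1"
      proof (rule normC_le)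
        fix x
        have "\<bar>1 + (\<Sum>p\<in>Q. apply_bcontfun p x)\<bar> \<le> 1 + (\<Sum>p\<in>Q. \<bar>apply_bcontfun p x\<bar>)"
          using sum_abs[of "\<lambda>p. apply_bcontfun p x" Q] by linarith
        also have "\<dots> \<le> 1 + real n" using sum_mono[of Q "\<lambda>p. \<bar>apply_bcontfun p x\<bar>" "\<lambda>p. 1"] pb by (simp add: n_def)
        finally show "\<bar>apply_bcontfun q x\<bar> \<le> 1" by (simp add: qapp)
      qed
      moreover have "1 \<le> norm q" using absC[of q k] qk by simp
      ultimately have nq: "norm (blinfun_apply T q) = 1" using iso by simp
      obtain s where s: "\<bar>apply_bcontfun (blinfun_apply T q) s\<bar> = 1" using norm_attained[OF cS, of "blinfun_apply T q"] nq by auto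
      have pos: "real n + 1 > 0" by simp
      have "\<bar>apply_bcontfun u s + (\<Sum>p\<in>Q. apply_bcontfun (blinfun_apply T p) s)\<bar> =
          \<bar>apply_bcontfun (blinfun_apply T q) s\<bar> * (real n + 1)"
        using pos by (simp add: Tqapp abs_divide)
      then have X: "\<bar>apply_bcontfun u s + (\<Sum>p\<in>Q. apply_bcontfun (blinfun_apply T p) s)\<bar> = real (card Q) + 1"
        using s by (simp add: n_def)
      have Tpb: "\<bar>apply_bcontfun (blinfun_apply T p) s\<bar> \<le> 1" if pQ: "p \<in> Q" for p
      proof -
        have "p \<in> P" using Q(1) pQ by (rule subsetD)
        then have "norm p \<le> 1" by (simp add: P_def)
        then show ?thesis using Tb[of p s] by simp
      qed
      have "\<bar>apply_bcontfun u s\<bar> = 1 \<and> (\<forall>p\<in>Q. apply_bcontfun (blinfun_apply T p) s = apply_bcontfun u s)"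
        by (rule avg[OF Q(2) ub[of s] Tpb X])
      then have "s \<in> UNIV \<inter> \<Inter>F'" using Q(3) by (auto simp: Aset_def)
      then show "UNIV \<inter> \<Inter>F' \<noteq> {}" by (metis empty_iff)
    qed
    then obtain s0 where s0: "\<And>p. p \<in> P \<Longrightarrow> \<bar>apply_bcontfun u s0\<bar> = 1 \<and> apply_bcontfun (blinfun_apply T p) s0 = apply_bcontfun u s0"
      by (auto simp: Aset_def)
    have oneP: "one \<in> P" by (simp add: P_def)
    have us0: "\<bar>apply_bcontfun u s0\<bar> = 1" using s0[OF oneP] by simp
    have uu: "apply_bcontfun u s0 * apply_bcontfun u s0 = 1" using pm1[OF us0] .
    have vanish: "apply_bcontfun (blinfun_apply T f) s0 = 0" if fk: "apply_bcontfun f k = 0" for f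
    proof (rule ccontr)
      assume ne: "apply_bcontfun (blinfun_apply T f) s0 \<noteq> 0"
      define a where "a = apply_bcontfun u s0 * apply_bcontfun (blinfun_apply T f) s0"
      have a0: "a \<noteq> 0" using ne us0 by (auto simp: a_def)
      define \<epsilon> where "\<epsilon> = \<bar>a\<bar> / 2"
      define U where "U = {x. \<bar>apply_bcontfun f x\<bar> < \<epsilon>}"
      have oU: "open U" unfolding U_def by (intro open_Collect_less continuous_intros) auto
      have kU: "k \<in> U" using fk a0 by (simp add: U_def \<epsilon>_def)
      have c1: "closed (- U)" using oU by (simp add: closed_Compl)
      have d1: "- U \<inter> {k} = {}" using kU by auto
      obtain p :: "'k \<Rightarrow> real" where pall: "continuous_on UNIV p \<and> (\<forall>x. 0 \<le> p x \<and> p x \<le> 1) \<and>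
          (\<forall>x\<in>- U. p x = 0) \<and> (\<forall>x\<in>{k}. p x = 1)"
        using ury_ex[OF cK c1 closed_singleton d1] by (elim exE) (rule that)
      have p: "continuous_on UNIV p" "\<forall>x. 0 \<le> p x \<and> p x \<le> 1" "\<forall>x\<in>- U. p x = 0" "\<forall>x\<in>{k}. p x = 1"
        using pall by simp_all
      define pc where "pc = mkC p"
      have pcapp: "apply_bcontfun pc = p" unfolding pc_def by (rule mkC_apply[OF cK p(1)])
      have "norm pc \<le> 1"
      proof (rule normC_le)
        fix x show "\<bar>apply_bcontfun pc x\<bar> \<le> 1" using p(2) by (simp add: pcapp abs_le_iff)
      qed
      then have "pc \<in> P" unfolding P_def using p(4) by (simp add: pcapp)
      then have Tpc: "apply_bcontfun (blinfun_apply T pc) s0 = apply_bcontfun u s0" using s0 by simp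
      define t where "t = 1 / (norm f + 1)"
      have np: "0 < norm f + 1" using norm_ge_zero[of f] by linarith
      then have tpos: "t > 0" by (simp add: t_def)
      have tf: "t * norm f \<le> 1" using np by (simp add: t_def divide_simps)
      define w where "w = pc + (sgn a * t) *\<^sub>R f"
      have sa: "sgn a = 1 \<or> sgn a = -1" using a0 by (cases "a > 0") (auto simp: sgn_pos sgn_neg)
      have sga: "sgn a * a = \<bar>a\<bar>" using a0 by (cases "a > 0") (auto simp: sgn_pos sgn_neg)
      have sabs: "\<bar>sgn a * t * y\<bar> = t * \<bar>y\<bar>" for y using sa tpos by (elim disjE) (simp_all add: abs_mult)
      have wx: "apply_bcontfun w x = p x + sgn a * t * apply_bcontfun f x" for x by (simp add: w_def pcapp)
      have "norm w \<le> 1 + t * \<epsilon>"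
      proof (rule normC_le)
        fix x
        have fx: "\<bar>apply_bcontfun f x\<bar> \<le> norm f" by (rule absC)
        have tri: "\<bar>apply_bcontfun w x\<bar> \<le> \<bar>p x\<bar> + t * \<bar>apply_bcontfun f x\<bar>"
          unfolding wx sabs[symmetric] by (rule abs_triangle_ineq)
        have p01: "0 \<le> p x \<and> p x \<le> 1" using p(2) by simp
        show "\<bar>apply_bcontfun w x\<bar> \<le> 1 + t * \<epsilon>"
        proof (cases "x \<in> U")
          case True
          then have "\<bar>apply_bcontfun f x\<bar> < \<epsilon>" by (simp add: U_def)
          then have "t * \<bar>apply_bcontfun f x\<bar> \<le> t * \<epsilon>" using tpos by (simp add: mult_left_mono less_imp_le)
          then show ?thesis using tri p01 by simp
        next
          case False
          then have "p x = 0" using p(3) by simp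
          moreover have "t * \<bar>apply_bcontfun f x\<bar> \<le> t * norm f" using tpos fx by (simp add: mult_left_mono)
          moreover have "0 \<le> t * \<epsilon>" using tpos by (simp add: \<epsilon>_def)
          ultimately show ?thesis using tri tf by simp
        qed
      qed
      moreover have "apply_bcontfun u s0 * apply_bcontfun (blinfun_apply T w) s0 = 1 + t * \<bar>a\<bar>"
      proof -
        have "apply_bcontfun (blinfun_apply T w) s0 = apply_bcontfun u s0 + sgn a * t * apply_bcontfun (blinfun_apply T f) s0"
          by (simp add: w_def blinfun.add_right blinfun.scaleR_right Tpc)
        then have "apply_bcontfun u s0 * apply_bcontfun (blinfun_apply T w) s0 =
            apply_bcontfun u s0 * apply_bcontfun u s0 + t * (sgn a * a)"
          by (simp add: a_def algebra_simps)
        then show ?thesis using uu sga by simp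
      qed
      moreover have "\<bar>apply_bcontfun u s0 * apply_bcontfun (blinfun_apply T w) s0\<bar> \<le> norm w"
        using Tb[of w s0] us0 by (simp add: abs_mult)
      ultimately have "t * \<bar>a\<bar> \<le> t * \<epsilon>" by simp
      then show False using tpos a0 by (simp add: \<epsilon>_def)
    qed
    have "Good k s0"
      unfolding Good_def
    proof (intro conjI allI)
      show "\<bar>apply_bcontfun u s0\<bar> = 1" by (rule us0)
      fix f
      have "apply_bcontfun (blinfun_apply T (f - apply_bcontfun f k *\<^sub>R one)) s0 = 0"
        by (rule vanish) simp
      then show "apply_bcontfun (blinfun_apply T f) s0 = apply_bcontfun u s0 * apply_bcontfun f k"
        by (simp add: blinfun.diff_right blinfun.scaleR_right u_def mult.commute)
    qed
    then show ?thesis by (rule exI)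
  qed
  define h where "h k = (SOME s. Good k s)" for k
  have hG: "Good k (h k)" for k unfolding h_def by (rule someI_ex[OF exA])
  have Gu: "\<bar>apply_bcontfun u s\<bar> = 1" if "Good k s" for k s using that by (simp add: Good_def)
  have GT: "apply_bcontfun (blinfun_apply T f) s = apply_bcontfun u s * apply_bcontfun f k" if "Good k s" for k s f
    using that by (simp add: Good_def)
  have Eext: "(apply_bcontfun u s *\<^sub>R ev s) o\<^sub>L T = ev k" if G: "Good k s" for k s
  proof (rule blinfun_eqI)
    fix f
    have "blinfun_apply ((apply_bcontfun u s *\<^sub>R ev s) o\<^sub>L T) f = apply_bcontfun u s * apply_bcontfun (blinfun_apply T f) s"
      by simp
    also have "\<dots> = (apply_bcontfun u s * apply_bcontfun u s) * apply_bcontfun f k" using GT[OF G] by simp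
    also have "\<dots> = apply_bcontfun f k" using pm1[OF Gu[OF G]] by simp
    finally show "blinfun_apply ((apply_bcontfun u s *\<^sub>R ev s) o\<^sub>L T) f = blinfun_apply (ev k) f" by simp
  qed
  have Enorm: "norm (apply_bcontfun u s *\<^sub>R ev s) = norm (ev k)" if G: "Good k s" for k s
    using Gu[OF G] by simp
  have Guniq: "s = s'" if G1: "Good k s" and G2: "Good k s'" for k s s'
  proof (rule ccontr)
    assume ne: "s \<noteq> s'"
    have eq: "apply_bcontfun u s *\<^sub>R ev s = apply_bcontfun u s' *\<^sub>R ev s'"
      using ex1_same[OF UQ[of "ev k"]] Eext[OF G1] Enorm[OF G1] Eext[OF G2] Enorm[OF G2] by simp
    obtain \<phi> :: "'s \<Rightarrow>\<^sub>C real" where \<phi>: "apply_bcontfun \<phi> s = 1" "apply_bcontfun \<phi> s' = 0"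
      using sepC[OF cS ne] by (elim exE conjE) (rule that)
    have "blinfun_apply (apply_bcontfun u s *\<^sub>R ev s) \<phi> = blinfun_apply (apply_bcontfun u s' *\<^sub>R ev s') \<phi>"
      by (simp only: eq)
    then have "apply_bcontfun u s = 0" using \<phi> by simp
    then show False using Gu[OF G1] by simp
  qed
  have hG_eq: "s = h k" if "Good k s" for k s using Guniq[OF that hG] .
  have inj: "inj h"
  proof (rule injI)
    fix k k' assume hk: "h k = h k'"
    have G': "Good k' (h k)" using hG[of k'] hk by simp
    have eq: "apply_bcontfun f k = apply_bcontfun f k'" for f :: "'k \<Rightarrow>\<^sub>C real"
    proof -
      have "apply_bcontfun u (h k) * apply_bcontfun f k = apply_bcontfun u (h k) * apply_bcontfun f k'"
        using GT[OF hG[of k], of f] GT[OF G', of f] by (simp, metis)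
      then show ?thesis using Gu[OF hG[of k]] by auto
    qed
    show "k = k'"
    proof (rule ccontr)
      assume kk: "k \<noteq> k'"
      obtain \<phi> :: "'k \<Rightarrow>\<^sub>C real" where "apply_bcontfun \<phi> k = 1" "apply_bcontfun \<phi> k' = 0"
        using sepC[OF cK kk] by (elim exE conjE) (rule that)
      then show False using eq[of \<phi>] by simp
    qed
  qed
  define G where "G = {z::'k \<times> 's. Good (fst z) (snd z)}"
  have Geq: "G = {z. \<bar>apply_bcontfun u (snd z)\<bar> = 1} \<inter>
      (\<Inter>f. {z. apply_bcontfun (blinfun_apply T f) (snd z) = apply_bcontfun u (snd z) * apply_bcontfun f (fst z)})"
    by (rule set_eqI) (simp add: G_def Good_def)
  have csnd: "continuous_on UNIV (\<lambda>z::'k \<times> 's. snd z)" by (intro continuous_intros)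
  have cfst: "continuous_on UNIV (\<lambda>z::'k \<times> 's. fst z)" by (intro continuous_intros)
  have cu: "continuous_on UNIV (\<lambda>z::'k \<times> 's. apply_bcontfun F (snd z))" for F :: "'s \<Rightarrow>\<^sub>C real"
    by (rule cont_app[OF csnd])
  have cf: "continuous_on UNIV (\<lambda>z::'k \<times> 's. apply_bcontfun F (fst z))" for F :: "'k \<Rightarrow>\<^sub>C real"
    by (rule cont_app[OF cfst])
  have clG: "closed G" unfolding Geq
  proof (intro closed_Int closed_INT ballI)
    show "closed {z::'k \<times> 's. \<bar>apply_bcontfun u (snd z)\<bar> = 1}"
      by (rule closed_Collect_eq[OF continuous_on_rabs[OF cu[of u]] continuous_on_const])
    fix f :: "'k \<Rightarrow>\<^sub>C real"
    show "closed {z. apply_bcontfun (blinfun_apply T f) (snd z) = apply_bcontfun u (snd z) * apply_bcontfun f (fst z)}"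
      by (rule closed_Collect_eq; intro continuous_intros cu cf)
  qed
  have pre: "h -` B \<inter> UNIV = fst ` (G \<inter> (UNIV \<times> B))" for B
  proof (rule set_eqI, rule iffI)
    fix k assume "k \<in> h -` B \<inter> UNIV"
    then have "(k, h k) \<in> G \<inter> (UNIV \<times> B)" using hG[of k] by (simp add: G_def)
    then show "k \<in> fst ` (G \<inter> (UNIV \<times> B))" by (rule image_eqI[rotated]) simp
  next
    fix k assume "k \<in> fst ` (G \<inter> (UNIV \<times> B))"
    then obtain z where z: "z \<in> G" "snd z \<in> B" "k = fst z" by auto
    then have "snd z = h k" using hG_eq by (simp add: G_def)
    then show "k \<in> h -` B \<inter> UNIV" using z by simp
  qed
  have cKS: "compact (UNIV :: ('k \<times> 's) set)" using compact_Times[OF cK cS] by simp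
  have hc: "continuous_on UNIV h"
    unfolding continuous_on_closed_vimage[OF closed_UNIV]
  proof (intro allI impI)
    fix B :: "'s set" assume "closed B"
    then have "closed (G \<inter> (UNIV \<times> B))" using clG by (intro closed_Int closed_Times) simp_all
    then have "compact (G \<inter> (UNIV \<times> B))" using cKS compact_Int_closed[of UNIV] by simp
    then have "compact (fst ` (G \<inter> (UNIV \<times> B)))"
      by (rule compact_continuous_image[rotated]) (intro continuous_intros)
    then show "closed (h -` B \<inter> UNIV)" unfolding pre by (rule compact_imp_closed)
  qed
  have emb: "embedding_map euclidean euclidean h"
  proof (rule continuous_imp_embedding_map)
    show "continuous_map euclidean euclidean h" using hc by simp
    show "compact_space (euclidean :: 'k topology)" using cK by (simp add: compact_space_def)
    show "Hausdorff_space (euclidean :: 's topology)" by (rule t2_Hausdorff)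
    show "inj_on h (topspace euclidean)" using inj by (simp add: inj_on_def inj_def)
  qed
  define v where "v = mulop u o\<^sub>L T"
  have vh: "apply_bcontfun (blinfun_apply v f) (h k) = apply_bcontfun f k" for f k
  proof -
    have "apply_bcontfun (blinfun_apply v f) (h k) = apply_bcontfun u (h k) * (apply_bcontfun u (h k) * apply_bcontfun f k)"
      using GT[OF hG[of k], of f] by (simp add: v_def)
    also have "\<dots> = apply_bcontfun f k" using pm1[OF Gu[OF hG[of k]]] by (simp add: mult.assoc[symmetric])
    finally show ?thesis .
  qed
  have lin: "linear_extension_operator h v" unfolding linear_extension_operator_def using vh by simp
  have nT: "norm T \<le> 1" by (rule norm_blinfun_bound) (simp_all add: iso)
  have nu: "norm u = 1" using iso[of one] by (simp add: u_def)
  have nv: "norm v = 1"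
  proof (rule antisym)
    have "norm v \<le> norm (mulop u) * norm T" unfolding v_def by (rule norm_blinfun_compose)
    also have "\<dots> \<le> 1 * 1" using norm_mulop[of u] nu nT by (intro mult_mono) simp_all
    finally show "norm v \<le> 1" by simp
    have "1 = \<bar>apply_bcontfun (blinfun_apply v one) (h undefined)\<bar>" by (simp add: vh)
    also have "\<dots> \<le> norm (blinfun_apply v one)" by (rule absC)
    also have "\<dots> \<le> norm v * norm (one :: 'k \<Rightarrow>\<^sub>C real)" by (rule norm_blinfun)
    finally show "1 \<le> norm v" by simp
  qed
  have clr: "closed (range h)" using compact_continuous_image[OF hc cK] by (simp add: compact_imp_closed)
  have rng: "range h = {s. \<bar>apply_bcontfun u s\<bar> = 1}"
  proof (rule set_eqI, rule iffI)
    fix s assume "s \<in> range h"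
    then obtain k where "s = h k" by auto
    then show "s \<in> {s. \<bar>apply_bcontfun u s\<bar> = 1}" using Gu[OF hG[of k]] by simp
  next
    fix s assume "s \<in> {s. \<bar>apply_bcontfun u s\<bar> = 1}"
    then have us: "\<bar>apply_bcontfun u s\<bar> = 1" by simp
    show "s \<in> range h"
    proof (rule ccontr)
      assume nr: "s \<notin> range h"
      define \<mu> where "\<mu> = apply_bcontfun u s *\<^sub>R (ev s o\<^sub>L T)"
      define y1 where "y1 = apply_bcontfun u s *\<^sub>R ev s"
      define M where "M = compop h o\<^sub>L mulop u"
      define y2 where "y2 = \<mu> o\<^sub>L M"
      have MT: "blinfun_apply M (blinfun_apply T f) = f" for f
        by (rule bcontfun_eqI) (simp add: M_def hc GT[OF hG] mult.assoc[symmetric] pm1[OF Gu[OF hG]])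
      have y1T: "y1 o\<^sub>L T = \<mu>" by (rule blinfun_eqI) (simp add: y1_def \<mu>_def)
      have y2T: "y2 o\<^sub>L T = \<mu>" by (rule blinfun_eqI) (simp add: y2_def MT)
      have mu1: "blinfun_apply \<mu> one = 1" using pm1[OF us] by (simp add: \<mu>_def u_def[symmetric])
      have nmu: "norm \<mu> = 1"
      proof (rule antisym)
        have "norm \<mu> = norm (ev s o\<^sub>L T)" using us by (simp add: \<mu>_def)
        also have "\<dots> \<le> norm (ev s) * norm T" by (rule norm_blinfun_compose)
        also have "\<dots> \<le> 1" using nT by simp
        finally show "norm \<mu> \<le> 1" .
        have "1 = \<bar>blinfun_apply \<mu> one\<bar>" using mu1 by simp
        also have "\<dots> \<le> norm \<mu> * norm (one :: 'k \<Rightarrow>\<^sub>C real)" using norm_blinfun[of \<mu> one] by simp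
        finally show "1 \<le> norm \<mu>" by simp
      qed
      have ny1: "norm y1 = norm \<mu>" using us nmu by (simp add: y1_def)
      have ny2: "norm y2 = norm \<mu>"
      proof (rule antisym)
        have nM: "norm M \<le> 1"
        proof -
          have "norm M \<le> norm (compop h) * norm (mulop u)" unfolding M_def by (rule norm_blinfun_compose)
          also have "\<dots> \<le> 1 * 1" using norm_compop[OF hc] norm_mulop[of u] nu by (intro mult_mono) simp_all
          finally show ?thesis by simp
        qed
        have "norm y2 \<le> norm \<mu> * norm M" unfolding y2_def by (rule norm_blinfun_compose)
        also have "\<dots> \<le> 1" using nmu nM by simp
        finally show "norm y2 \<le> norm \<mu>" using nmu by simp
        have "blinfun_apply y2 (blinfun_apply T one) = 1" using mu1 by (simp add: y2_def MT)
        then have "1 \<le> norm y2 * norm (blinfun_apply T one)" using norm_blinfun[of y2 "blinfun_apply T one"] by simp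
        then show "norm \<mu> \<le> norm y2" using nmu iso[of one] by simp
      qed
      have y12: "y1 = y2" using ex1_same[OF UQ[of \<mu>]] y1T ny1 y2T ny2 by simp
      have d: "range h \<inter> {s} = {}" using nr by auto
      obtain f0 :: "'s \<Rightarrow> real" where f0all: "continuous_on UNIV f0 \<and> (\<forall>x. 0 \<le> f0 x \<and> f0 x \<le> 1) \<and> (\<forall>x\<in>range h. f0 x = 0) \<and> (\<forall>x\<in>{s}. f0 x = 1)"
        using ury_ex[OF cS clr closed_singleton d] by (elim exE) (rule that)
      have f0: "continuous_on UNIV f0" "\<forall>x. 0 \<le> f0 x \<and> f0 x \<le> 1" "\<forall>x\<in>range h. f0 x = 0" "\<forall>x\<in>{s}. f0 x = 1"
        using f0all by simp_all
      define \<Phi> where "\<Phi> = mkC f0"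
      have \<Phi>app: "apply_bcontfun \<Phi> = f0" unfolding \<Phi>_def by (rule mkC_apply[OF cS f0(1)])
      have "blinfun_apply M \<Phi> = 0" by (rule bcontfun_eqI) (simp add: M_def hc \<Phi>app f0(3))
      then have "blinfun_apply y2 \<Phi> = 0" by (simp add: y2_def)
      moreover have "blinfun_apply y1 \<Phi> = apply_bcontfun u s" using f0(4) by (simp add: y1_def \<Phi>app)
      ultimately show False using y12 us by simp
    qed
  qed
  define W where "W n = {s. 1 - inverse (real (Suc n)) < \<bar>apply_bcontfun u s\<bar>}" for n
  have rW: "range h = \<Inter>(range W)"
  proof (rule set_eqI, rule iffI)
    fix s assume "s \<in> range h"
    then have "\<bar>apply_bcontfun u s\<bar> = 1" using rng by simp
    then show "s \<in> \<Inter>(range W)" by (simp add: W_def)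
  next
    fix s assume sW: "s \<in> \<Inter>(range W)"
    have "\<bar>apply_bcontfun u s\<bar> = 1"
    proof (rule ccontr)
      assume "\<bar>apply_bcontfun u s\<bar> \<noteq> 1"
      then have "0 < 1 - \<bar>apply_bcontfun u s\<bar>" using ub[of s] by simp
      then have "\<exists>n>0. inverse (of_nat n) < 1 - \<bar>apply_bcontfun u s\<bar>" by (rule ex_inverse_of_nat_less)
      then obtain n :: nat where n: "n > 0" "inverse (real n) < 1 - \<bar>apply_bcontfun u s\<bar>"
        by auto
      then obtain m where m: "n = Suc m" by (cases n) simp_all
      have "s \<in> W m" using sW by simp
      then show False using n m by (simp add: W_def)
    qed
    then show "s \<in> range h" using rng by simp
  qed
  have gd: "gdelta_in euclidean (range h)"
    unfolding rW
  proof (rule gdelta_in_Inter)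
    show "countable (range W)" by simp
    show "range W \<noteq> {}" by simp
    fix S assume "S \<in> range W"
    then obtain n where "S = W n" by auto
    have "open (W n)" unfolding W_def by (intro open_Collect_less continuous_intros) auto
    then have "openin euclidean (W n)" by (rule iffD1[OF open_openin])
    then have "gdelta_in euclidean (W n)" by (rule open_imp_gdelta_in)
    then show "gdelta_in euclidean S" using \<open>S = W n\<close> by simp
  qed
  have ev: "\<exists>v. linear_extension_operator h v \<and> norm v = 1" using lin nv by (intro exI[of _ v] conjI)
  show ?thesis using emb ev gd by (intro exI[of _ h] conjI)
qed

theorem theorem6p22:
  fixes dummyK :: "'k::t2_space" and dummyS :: "'s::t2_space"
  assumes "compact (UNIV :: 'k set)" and "compact (UNIV :: 's set)"
  shows "(\<exists>T :: ('k \<Rightarrow>\<^sub>C real) \<Rightarrow>\<^sub>L ('s \<Rightarrow>\<^sub>C real). U_embedding T) \<longleftrightarrow>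
         (\<exists>h :: 'k \<Rightarrow> 's. embedding_map euclidean euclidean h \<and>
            (\<exists>v. linear_extension_operator h v \<and> norm v = 1) \<and>
            gdelta_in euclidean (range h))"
proof
  assume "\<exists>T :: ('k \<Rightarrow>\<^sub>C real) \<Rightarrow>\<^sub>L ('s \<Rightarrow>\<^sub>C real). U_embedding T"
  then obtain T :: "('k \<Rightarrow>\<^sub>C real) \<Rightarrow>\<^sub>L ('s \<Rightarrow>\<^sub>C real)" where T: "U_embedding T" ..
  show "\<exists>h :: 'k \<Rightarrow> 's. embedding_map euclidean euclidean h \<and>
            (\<exists>v. linear_extension_operator h v \<and> norm v = 1) \<and>
            gdelta_in euclidean (range h)"
    by (rule dir1[OF assms T])
next
  assume "\<exists>h :: 'k \<Rightarrow> 's. embedding_map euclidean euclidean h \<and>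
            (\<exists>v. linear_extension_operator h v \<and> norm v = 1) \<and>
            gdelta_in euclidean (range h)"
  then obtain h :: "'k \<Rightarrow> 's" where hh: "embedding_map euclidean euclidean h \<and>
            (\<exists>v. linear_extension_operator h v \<and> norm v = 1) \<and>
            gdelta_in euclidean (range h)" ..
  have emb: "embedding_map euclidean euclidean h" using hh by (rule conjunct1)
  have gd: "gdelta_in euclidean (range h)" using hh by simp
  have "\<exists>v. linear_extension_operator h v \<and> norm v = 1" using hh by simp
  then obtain v where vv: "linear_extension_operator h v \<and> norm v = 1" ..
  have lin: "linear_extension_operator h v" using vv by (rule conjunct1)
  have nv: "norm v = 1" using vv by (rule conjunct2)
  show "\<exists>T :: ('k \<Rightarrow>\<^sub>C real) \<Rightarrow>\<^sub>L ('s \<Rightarrow>\<^sub>C real). U_embedding T"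
    by (rule dir2[OF assms emb lin nv gd])
qed

end
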